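(* Let $n,d$ be positive integers. If $G$ is a graph with $n$ vertices and $\frac{nd}{2}-1$ edges, then the number of closed walks of length four in $G$ is at least $n(2d^2-d)-8d+2$.
   Context: All graphs are finite, simple and undirected. A closed walk of length four is a sequence of vertices $v_0v_1v_2v_3v_4$ with $v_4=v_0$ and $v_{i}v_{i+1}$ an edge for each $0\le i\le 3$. *)

theory Defs
  imports Main
begin

definition simple_graph :: "'a set \<Rightarrow> 'a set set \<Rightarrow> bool" where
  "simple_graph V E \<longleftrightarrow> finite V \<and> (\<forall>e\<in>E. \<exists>u v. u \<in> V \<and> v \<in> V \<and> u \<noteq> v \<and> e = {u, v})"

definition closed_walks4 :: "'a set set \<Rightarrow> ('a \<times> 'a \<times> 'a \<times> 'a) set" where
  "closed_walks4 E = {(v0, v1, v2, v3). {v0, v1} \<in> E \<and> {v1, v2} \<in> E \<and> {v2, v3} \<in> E \<and> {v3, v0} \<in> E}"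

end

theory Submission
  imports Defs
begin

lemma edge_facts:
  assumes "simple_graph V E" "{a,b} \<in> E"
  shows "a \<in> V" "b \<in> V" "a \<noteq> b"
proof -
  from assms obtain u v where "u \<in> V" "v \<in> V" "u \<noteq> v" "{a,b} = {u,v}"
    unfolding simple_graph_def by blast
  then show "a \<in> V" "b \<in> V" "a \<noteq> b" by (auto simp: doubleton_eq_iff)
qed

lemma handshake:
  assumes G: "simple_graph V E"
  shows "card (Sigma V (\<lambda>v. {u. {v,u} \<in> E})) = 2 * card E"
proof -
  have fV: "finite V" using G by (simp add: simple_graph_def)
  have EV: "E \<subseteq> Pow V"
  proof
    fix e assume "e \<in> E"
    then obtain u v where "u \<in> V" "v \<in> V" "e = {u,v}" using G unfolding simple_graph_def by meson
    then show "e \<in> Pow V" by simp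
  qed
  have fE: "finite E" using fV EV by (meson finite_Pow_iff finite_subset)
  have eq: "Sigma V (\<lambda>v. {u. {v,u} \<in> E}) = (\<Union>e\<in>E. {(x,y). {x,y} = e})"
  proof (intro equalityI subsetI)
    fix p assume "p \<in> Sigma V (\<lambda>v. {u. {v,u} \<in> E})"
    then show "p \<in> (\<Union>e\<in>E. {(x,y). {x,y} = e})" by auto
  next
    fix p assume "p \<in> (\<Union>e\<in>E. {(x,y). {x,y} = e})"
    then obtain x y where p: "p = (x,y)" "{x,y} \<in> E" by auto
    then have "x \<in> V" using edge_facts(1)[OF G] by blast
    then show "p \<in> Sigma V (\<lambda>v. {u. {v,u} \<in> E})" using p by auto
  qed
  have c2: "card {(x,y). {x,y} = e} = 2" if "e \<in> E" for e
  proof -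
    from that G obtain u v where "u \<noteq> v" "e = {u,v}"
      unfolding simple_graph_def by blast
    then have "{(x,y). {x,y} = e} = {(u,v),(v,u)}" by (auto simp: doubleton_eq_iff)
    then show ?thesis using \<open>u \<noteq> v\<close> by simp
  qed
  have fin: "finite {(x,y). {x,y} = e}" if "e \<in> E" for e
    using c2[OF that] card.infinite by fastforce
  have "card (\<Union>e\<in>E. {(x,y). {x,y} = e}) = (\<Sum>e\<in>E. card {(x,y). {x,y} = e})"
    by (rule card_UN_disjoint[OF fE]) (use fin in auto)
  also have "\<dots> = 2 * card E" using c2 by simp
  finally show ?thesis using eq by simp
qed

theorem corollary3p2:
  fixes V :: "'a set" and E :: "'a set set" and n d :: nat
  assumes "simple_graph V E"
    and "card V = n"
    and "n > 0" and "d > 0"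
    and "2 * int (card E) = int n * int d - 2"
  shows "int (card (closed_walks4 E)) \<ge> int n * (2 * int d ^ 2 - int d) - 8 * int d + 2"
proof -
  note G = assms(1)
  define N where "N v = {u. {v,u} \<in> E}" for v
  define deg where "deg v = card (N v)" for v
  have fV: "finite V" using G by (simp add: simple_graph_def)
  have NV: "N v \<subseteq> V" for v using edge_facts[OF G] unfolding N_def by blast
  have fN: "finite (N v)" for v using NV fV finite_subset by blast
  have hs: "(\<Sum>v\<in>V. deg v) = 2 * card E"
    using handshake[OF G] card_SigmaI[OF fV, of N] fN unfolding deg_def N_def by simp
  define S1 where "S1 = Sigma V (\<lambda>v. N v \<times> N v)"
  define S2 where "S2 = Sigma V (\<lambda>v. {p \<in> N v \<times> N v. fst p \<noteq> snd p})"
  define f where "f = (\<lambda>(v::'a,(a::'a,b::'a)). (v,a,v,b))"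
  define g where "g = (\<lambda>(v::'a,(a::'a,b::'a)). (a,v,b,v))"
  have W: "closed_walks4 E \<subseteq> V \<times> V \<times> V \<times> V"
    unfolding closed_walks4_def using edge_facts[OF G] by auto
  have fW: "finite (closed_walks4 E)" using W fV finite_subset by (metis finite_SigmaI)
  have sub: "f ` S1 \<union> g ` S2 \<subseteq> closed_walks4 E"
    unfolding S1_def S2_def f_def g_def closed_walks4_def N_def
    by (auto simp: insert_commute)
  have dis: "f ` S1 \<inter> g ` S2 = {}"
    unfolding S1_def S2_def f_def g_def by auto
  have i1: "inj_on f S1" unfolding f_def inj_on_def by auto
  have i2: "inj_on g S2" unfolding g_def inj_on_def by auto
  have fS1: "finite S1" unfolding S1_def using fV fN by auto
  have fS2: "finite S2" unfolding S2_def using fV fN by auto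
  have "card (f ` S1 \<union> g ` S2) = card S1 + card S2"
    using card_Un_disjoint[OF _ _ dis] fS1 fS2 card_image[OF i1] card_image[OF i2] by simp
  then have le: "card S1 + card S2 \<le> card (closed_walks4 E)"
    using card_mono[OF fW sub] by simp
  have c1: "card S1 = (\<Sum>v\<in>V. deg v * deg v)"
    unfolding S1_def deg_def by (subst card_SigmaI[OF fV]) (use fN in \<open>auto simp: card_cartesian_product\<close>)
  have c2v: "card {p \<in> N v \<times> N v. fst p \<noteq> snd p} = deg v * deg v - deg v" for v
  proof -
    have "{p \<in> N v \<times> N v. fst p \<noteq> snd p} = N v \<times> N v - (\<lambda>a. (a,a)) ` N v" by auto
    moreover have "card ((\<lambda>a. (a,a)) ` N v) = deg v"
      unfolding deg_def by (rule card_image) (auto simp: inj_on_def)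
    moreover have "(\<lambda>a. (a,a)) ` N v \<subseteq> N v \<times> N v" by auto
    ultimately show ?thesis using fN
      by (simp add: card_Diff_subset finite_imageI card_cartesian_product deg_def)
  qed
  have c2: "card S2 = (\<Sum>v\<in>V. deg v * deg v - deg v)"
    unfolding S2_def by (subst card_SigmaI[OF fV]) (use fN c2v in auto)
  have iS2: "int (card S2) = (\<Sum>v\<in>V. int (deg v) * int (deg v) - int (deg v))"
    unfolding c2 by (simp add: of_nat_diff)
  have iS1: "int (card S1) = (\<Sum>v\<in>V. int (deg v) * int (deg v))"
    unfolding c1 by simp
  have ihs: "(\<Sum>v\<in>V. int (deg v)) = int n * int d - 2"
    using hs assms(5) by (metis of_nat_sum of_nat_mult of_nat_numeral)
  have sq: "0 \<le> (\<Sum>v\<in>V. (int (deg v) - int d)^2)" by (simp add: sum_nonneg)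
  also have "\<dots> = (\<Sum>v\<in>V. int (deg v) * int (deg v)) - 2 * int d * (\<Sum>v\<in>V. int (deg v)) + int n * int d ^ 2"
    using assms(2) by (simp add: power2_eq_square algebra_simps sum.distrib sum_subtractf sum_distrib_left)
  finally have key: "0 \<le> (\<Sum>v\<in>V. int (deg v) * int (deg v)) - 2 * int d * (int n * int d - 2) + int n * int d ^ 2"
    using ihs by simp
  have "int (card S1) + int (card S2) = 2 * (\<Sum>v\<in>V. int (deg v) * int (deg v)) - (int n * int d - 2)"
    unfolding iS1 iS2 using ihs by (simp add: sum_subtractf)
  moreover have "int (card S1) + int (card S2) \<le> int (card (closed_walks4 E))" using le by linarith
  ultimately show ?thesis using key by (simp add: power2_eq_square algebra_simps)
qed

end
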